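(* The oriented submanifold $V_{1,2}\subset Q_2^*$ consists of a single point, and this point is positively oriented.
   Context: Let $G=Sp(1)$ (unit quaternions, a $3$-sphere, with a fixed orientation), $G'=G/\{\pm1\}=SO(3)$ with the induced orientation. For $n\ge2$ let $P_n=G^n$ (product orientation) with the right $G'$-action induced by $g$ acting by conjugation by $g^{-1}$ in each factor; $P_n^*$ is the open set of points with trivial $G'$-stabilizer and $Q_n^*=P_n^*/G'$, with $\pi:P_n^*\to Q_n^*$ a principal $G'$-bundle. Orientation conventions: for an oriented submanifold $Z\subset W$ the normal bundle is oriented so that $TW|_Z=NZ\oplus TZ$ preserves orientation; for $f:V\to W$ transverse to $Z$, $f^{-1}(Z)$ is oriented so that $N(f^{-1}Z)\to f^*NZ$ preserves orientation; for a fibre bundle $P\to V$ with oriented total space, a fibre $F$ is oriented so that $TP|_F=TF\oplus\pi^*TV|_F$ preserves orientation. $Q_n^*$ is oriented so that, with fibres oriented by $G'$, these conventions hold for $\pi$. Let $G$ act on $G$ on the left by conjugation (descending to $G'$), and let $E_{1,n}=P_n^*\times_{G'}G\to Q_n^*$, with fibres oriented from $G$ and total space oriented by the fibre convention. Let $-\mathbf 1\subset E_{1,n}$ be the image of the section given by the fixed point $-1\in G$. For $1\le p<q\le n$, the equivariant map $P_n\to G$, $(g_1,\dots,g_n)\mapsto[g_p,g_q]=g_pg_qg_p^{-1}g_q^{-1}$, defines a section $\zeta_{p,q}$ of $E_{1,n}$, which is transverse to $-\mathbf1$; $V_{p,q}:=\zeta_{p,q}^{-1}(-\mathbf 1)\subset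 Q_n^*$ with the induced orientation. *)

theory Defs
  imports "HOL-Analysis.Analysis"
begin

text \<open>Quaternions H = C + C j (Cayley-Dickson), realised on the Euclidean space complex \<times> complex.
  The pair (a,b) stands for a + b j; so i = (\<i>,0), j = (0,1), k = ij = (0,\<i>).\<close>

type_synonym quat = "complex \<times> complex"

definition qmult :: "quat \<Rightarrow> quat \<Rightarrow> quat" where
  "qmult p q = (fst p * fst q - cnj (snd q) * snd p, snd q * fst p + snd p * cnj (fst q))"

definition qcnj :: "quat \<Rightarrow> quat" where
  "qcnj q = (cnj (fst q), - snd q)"

definition qone :: quat where "qone = (1, 0)"
definition qi :: quat where "qi = (\<i>, 0)"
definition qj :: quat where "qj = (0, 1)"
definition qk :: quat where "qk = (0, \<i>)"

text \<open>G = Sp(1), the unit quaternions (inverse = conjugate on G).\<close>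
definition Sp1 :: "quat set" where "Sp1 = {q. norm q = 1}"

text \<open>P_2 = G^2 and the right action: g acts by conjugation by g^{-1} in each factor.\<close>
definition P2 :: "(quat \<times> quat) set" where "P2 = Sp1 \<times> Sp1"

definition act :: "quat \<times> quat \<Rightarrow> quat \<Rightarrow> quat \<times> quat" where
  "act x g = (qmult (qcnj g) (qmult (fst x) g), qmult (qcnj g) (qmult (snd x) g))"

text \<open>Trivial G' = G/{\<plusminus>1} stabilizer: the G-stabilizer is contained in {1,-1}.\<close>
definition P2star :: "(quat \<times> quat) set" where
  "P2star = {x \<in> P2. {g \<in> Sp1. act x g = x} \<subseteq> {qone, - qone}}"

definition orbit :: "quat \<times> quat \<Rightarrow> (quat \<times> quat) set" where
  "orbit x = (\<lambda>g. act x g) ` Sp1"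

text \<open>Q_2^* = P_2^*/G', points being G'-orbits.\<close>
definition Q2star :: "(quat \<times> quat) set set" where
  "Q2star = orbit ` P2star"

text \<open>The commutator map [g_1,g_2] = g_1 g_2 g_1^{-1} g_2^{-1} (inverse = conjugate on G;
  this polynomial formula is a smooth extension to all of H^2).\<close>
definition comm :: "quat \<times> quat \<Rightarrow> quat" where
  "comm x = qmult (qmult (fst x) (snd x)) (qmult (qcnj (fst x)) (qcnj (snd x)))"

definition V12 :: "(quat \<times> quat) set set" where
  "V12 = {orbit x | x. x \<in> P2star \<and> comm x = - qone}"

definition TG :: "quat \<Rightarrow> quat set" where "TG g = {v. inner g v = 0}"
definition TP :: "quat \<times> quat \<Rightarrow> (quat \<times> quat) set" where
  "TP x = TG (fst x) \<times> TG (snd x)"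

text \<open>Orientation of G: the basis (g i, g j, g k) of T_g G is positive (the left translate of
  (i,j,k) at 1).  Coordinates of v \<in> T_g G with respect to that basis:\<close>
definition gcoord :: "quat \<Rightarrow> quat \<Rightarrow> nat \<Rightarrow> real" where
  "gcoord g v l = (let w = qmult (qcnj g) v in
     if l = 0 then Im (fst w) else if l = 1 then Re (snd w) else Im (snd w))"

text \<open>Product orientation on P_2: coordinates 0,1,2 from the first factor, 3,4,5 from the second.\<close>
definition Pcoord :: "quat \<times> quat \<Rightarrow> quat \<times> quat \<Rightarrow> nat \<Rightarrow> real" where
  "Pcoord x v l = (if l < 3 then gcoord (fst x) (fst v) l else gcoord (snd x) (snd v) (l - 3))"

definition ebasis :: "nat \<Rightarrow> quat" where
  "ebasis l = (if l = 0 then qi else if l = 1 then qj else qk)"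

text \<open>Fundamental vector field of the G'-action at x for \<xi> \<in> T_1 G = Im H:
  d/dt (exp(-t xi) g exp(t xi)) at t = 0, in each factor.  The fibre through x is oriented
  by the images of the positive basis (i,j,k) of T_1 G.\<close>
definition fibvec :: "quat \<times> quat \<Rightarrow> quat \<Rightarrow> quat \<times> quat" where
  "fibvec x \<xi> = (qmult (fst x) \<xi> - qmult \<xi> (fst x), qmult (snd x) \<xi> - qmult \<xi> (snd x))"

definition det_n :: "nat \<Rightarrow> (nat \<Rightarrow> nat \<Rightarrow> real) \<Rightarrow> real" where
  "det_n n M = (\<Sum>p | p permutes {..<n}. of_int (sign p) * (\<Prod>i<n. M i (p i)))"

text \<open>The point [x] of V_{1,2} (x \<in> P_2^*, [x_1,x_2] = -1) is positively oriented:
  for every triple h of tangent vectors at x such that (fibre basis, h) is a positive basis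
  of T_x P_2 (so that h projects to a positive basis of T_[x] Q_2^*), the images
  d[.,.](h) form a positive basis of T_{-1} G (the fibre of E_{1,2} at -1, which by the
  conventions orients the normal bundle of the section -1).\<close>
definition pos_oriented_pt :: "quat \<times> quat \<Rightarrow> bool" where
  "pos_oriented_pt x \<longleftrightarrow>
     (\<forall>h :: nat \<Rightarrow> quat \<times> quat. (\<forall>l<3. h l \<in> TP x) \<longrightarrow>
        det_n 6 (\<lambda>r c. Pcoord x (if c < 3 then fibvec x (ebasis c) else h (c - 3)) r) > 0 \<longrightarrow>
        det_n 3 (\<lambda>r c. gcoord (- qone) (frechet_derivative comm (at x) (h c)) r) > 0)"

end

theory Submission
  imports Defs Jordan_Normal_Form.Determinant
begin


lemma det_n_mat: "det_n n f = Determinant.det (mat n n (\<lambda>(i,j). f i j))"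
  unfolding det_n_def Determinant.det_def
  by (simp add: atLeast0LessThan)

lemma lap: assumes "A \<in> carrier_mat (Suc n) (Suc n)"
  shows "Determinant.det A = (\<Sum>j<Suc n. A $$ (0,j) * ((-1)^j * Determinant.det (mat_delete A 0 j)))"
  using laplace_expansion_row[OF assms, of 0] by (simp add: cofactor_def)

lemma det1: "A \<in> carrier_mat (Suc 0) (Suc 0) \<Longrightarrow> Determinant.det A = A $$ (0,0)"
  using lap[of A 0] by (simp add: mat_delete_def)

lemma det2: "A \<in> carrier_mat (Suc (Suc 0)) (Suc (Suc 0)) \<Longrightarrow> Determinant.det A = A $$ (0,0) * A $$ (1,1) - A $$ (0,1) * A $$ (1,0)"
  using lap[of A 1] by (simp add: det1 mat_delete_def insert_index_def)

lemma det3: "A \<in> carrier_mat 3 3 \<Longrightarrow> Determinant.det A =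
   A $$ (0,0) * (A $$ (1,1) * A $$ (2,2) - A $$ (1,2) * A $$ (2,1))
 - A $$ (0,1) * (A $$ (1,0) * A $$ (2,2) - A $$ (1,2) * A $$ (2,0))
 + A $$ (0,2) * (A $$ (1,0) * A $$ (2,1) - A $$ (1,1) * A $$ (2,0))"
  using lap[of A 2] by (simp add: numeral_3_eq_3 numeral_2_eq_2 det2 mat_delete_def insert_index_def algebra_simps)

lemma det_n3: "det_n 3 M =
   M 0 0 * (M 1 1 * M 2 2 - M 1 2 * M 2 1)
 - M 0 1 * (M 1 0 * M 2 2 - M 1 2 * M 2 0)
 + M 0 2 * (M 1 0 * M 2 1 - M 1 1 * M 2 0)"
  unfolding det_n_mat by (subst det3) auto


lemma det_n_cong: "(\<And>r c. r < n \<Longrightarrow> c < n \<Longrightarrow> M r c = M' r c) \<Longrightarrow> det_n n M = det_n n M'"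
  unfolding det_n_mat by (intro arg_cong[where f=Determinant.det] eq_matI) auto

lemma det_n_mult: "det_n n (\<lambda>r c. \<Sum>s<n. A r s * B s c) = det_n n A * det_n n B"
proof -
  have "mat n n (\<lambda>(r,c). \<Sum>s<n. A r s * B s c) = mat n n (\<lambda>(i,j). A i j) * mat n n (\<lambda>(i,j). B i j)"
    by (rule eq_matI) (auto simp: scalar_prod_def atLeast0LessThan intro!: sum.cong)
  then show ?thesis unfolding det_n_mat by (simp add: det_mult[of _ n])
qed

lemma det_n_block: assumes "\<And>r c. 3 \<le> r \<Longrightarrow> r < 6 \<Longrightarrow> c < 3 \<Longrightarrow> M r c = 0"
  shows "det_n 6 M = det_n 3 M * det_n 3 (\<lambda>r c. M (r+3) (c+3))"
proof -
  have e: "mat 6 6 (\<lambda>(i,j). M i j) = four_block_mat (mat 3 3 (\<lambda>(i,j). M i j)) (mat 3 3 (\<lambda>(i,j). M i (j+3)))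
      (0\<^sub>m 3 3) (mat 3 3 (\<lambda>(i,j). M (i+3) (j+3)))"
    by (rule eq_matI) (auto simp: assms)
  show ?thesis unfolding det_n_mat e
    by (rule det_four_block_mat_lower_left_zero) auto
qed

lemma det_n_swap03: "det_n 6 (\<lambda>r c. M (if r = 0 then 3 else if r = 3 then 0 else r) c) = - det_n 6 M"
proof -
  have "mat 6 6 (\<lambda>(r,c). M (if r = 0 then 3 else if r = 3 then 0 else r) c) = swaprows 0 3 (mat 6 6 (\<lambda>(i,j). M i j))"
    by (rule eq_matI) auto
  then show ?thesis unfolding det_n_mat by (simp add: det_swaprows[of _ 6])
qed

lemma det_n_addrow52: "det_n 6 (\<lambda>r c. if r = 5 then M 5 c + a * M 2 c else M r c) = det_n 6 M"
proof -
  have "mat 6 6 (\<lambda>(r,c). if r = 5 then M 5 c + a * M 2 c else M r c) = addrow a 5 2 (mat 6 6 (\<lambda>(i,j). M i j))"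
    by (rule eq_matI) auto
  then show ?thesis unfolding det_n_mat by (simp add: det_addrow[of _ 6])
qed


lemma qmult_assoc: "qmult (qmult p q) r = qmult p (qmult q r)"
  by (cases p; cases q; cases r) (simp add: qmult_def complex_eq_iff algebra_simps)

lemma qmult_add_left: "qmult (p + q) r = qmult p r + qmult q r"
  by (cases p; cases q; cases r) (simp add: qmult_def complex_eq_iff algebra_simps)
lemma qmult_add_right: "qmult r (p + q) = qmult r p + qmult r q"
  by (cases p; cases q; cases r) (simp add: qmult_def complex_eq_iff algebra_simps)
lemma qmult_diff_left: "qmult (p - q) r = qmult p r - qmult q r"
  by (cases p; cases q; cases r) (simp add: qmult_def complex_eq_iff algebra_simps)
lemma qmult_diff_right: "qmult r (p - q) = qmult r p - qmult r q"
  by (cases p; cases q; cases r) (simp add: qmult_def complex_eq_iff algebra_simps)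
lemma qmult_minus_left: "qmult (- p) r = - qmult p r"
  by (cases p; cases r) (simp add: qmult_def complex_eq_iff algebra_simps)
lemma qmult_minus_right: "qmult r (- p) = - qmult r p"
  by (cases p; cases r) (simp add: qmult_def complex_eq_iff algebra_simps)
lemma qmult_scaleR_left: "qmult (c *\<^sub>R p) r = c *\<^sub>R qmult p r"
  by (cases p; cases r) (simp add: qmult_def complex_eq_iff algebra_simps)
lemma qmult_scaleR_right: "qmult r (c *\<^sub>R p) = c *\<^sub>R qmult r p"
  by (cases p; cases r) (simp add: qmult_def complex_eq_iff algebra_simps)
lemma qmult_zero_left[simp]: "qmult 0 r = 0" and qmult_zero_right[simp]: "qmult r 0 = 0"
  by (simp_all add: qmult_def zero_prod_def)
lemma qmult_one_left[simp]: "qmult qone r = r" and qmult_one_right[simp]: "qmult r qone = r"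
  by (simp_all add: qmult_def qone_def)

lemma qcnj_mult: "qcnj (qmult p q) = qmult (qcnj q) (qcnj p)"
  by (cases p; cases q) (simp add: qmult_def qcnj_def complex_eq_iff algebra_simps)
lemma qcnj_qcnj[simp]: "qcnj (qcnj p) = p"
  by (simp add: qcnj_def)
lemma qcnj_add: "qcnj (p + q) = qcnj p + qcnj q"
  by (simp add: qcnj_def)
lemma qcnj_diff: "qcnj (p - q) = qcnj p - qcnj q"
  by (simp add: qcnj_def)
lemma qcnj_minus: "qcnj (- p) = - qcnj p"
  by (simp add: qcnj_def)
lemma qcnj_scaleR: "qcnj (c *\<^sub>R p) = c *\<^sub>R qcnj p"
  by (simp add: qcnj_def)

lemma norm_q: "norm (q::quat) = 1 \<longleftrightarrow> (Re (fst q))\<^sup>2 + (Im (fst q))\<^sup>2 + (Re (snd q))\<^sup>2 + (Im (snd q))\<^sup>2 = 1"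
  by (cases q) (simp add: norm_Pair cmod_def add.assoc)

lemma unit_sq: "norm (q::quat) = 1 \<Longrightarrow> (Re (fst q))\<^sup>2 + (Im (fst q))\<^sup>2 + (Re (snd q))\<^sup>2 + (Im (snd q))\<^sup>2 = 1"
  using norm_q by blast

lemma qcnj_mult_self: "norm q = 1 \<Longrightarrow> qmult (qcnj q) q = qone"
  apply (drule unit_sq) apply (cases q) by (simp add: qmult_def qcnj_def qone_def complex_eq_iff algebra_simps power2_eq_square)
lemma qmult_cnj_self: "norm q = 1 \<Longrightarrow> qmult q (qcnj q) = qone"
  apply (drule unit_sq) apply (cases q) by (simp add: qmult_def qcnj_def qone_def complex_eq_iff algebra_simps power2_eq_square)


definition im3 :: "quat \<Rightarrow> nat \<Rightarrow> real" where
  "im3 w l = (if l = 0 then Im (fst w) else if l = 1 then Re (snd w) else Im (snd w))"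

lemma gcoord_im3: "gcoord g v l = im3 (qmult (qcnj g) v) l"
  by (simp add: gcoord_def im3_def Let_def)

definition cj :: "quat \<Rightarrow> quat \<Rightarrow> quat" where "cj g v = qmult (qcnj g) (qmult v g)"
definition cj2 :: "quat \<Rightarrow> quat \<times> quat \<Rightarrow> quat \<times> quat" where "cj2 g x = (cj g (fst x), cj g (snd x))"
lemma act_cj2: "act x g = cj2 g x" by (simp add: act_def cj2_def cj_def)

definition Rm :: "quat \<Rightarrow> nat \<Rightarrow> nat \<Rightarrow> real" where "Rm g l k = im3 (cj g (ebasis k)) l"

lemma sum3: fixes f :: "nat \<Rightarrow> 'a::comm_monoid_add" shows "(\<Sum>k<3. f k) = f 0 + f 1 + f 2"
  by (simp add: numeral_3_eq_3 numeral_2_eq_2 add.commute add.left_commute)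

lemma L1: "im3 (cj g w) l = (\<Sum>k<3. Rm g l k * im3 w k)"
  by (cases g; cases w) (simp add: sum3 Rm_def im3_def cj_def qmult_def qcnj_def ebasis_def qi_def qj_def qk_def algebra_simps)

lemma Rm_orth: "cj (qcnj g) (ebasis c) = (\<Sum>t<3. Rm g c t *\<^sub>R ebasis t)"
  by (cases g) (simp add: sum3 Rm_def im3_def cj_def qmult_def qcnj_def ebasis_def qi_def qj_def qk_def algebra_simps complex_eq_iff)


lemma norm_sq_q: "(norm (q::quat))\<^sup>2 = (Re (fst q))\<^sup>2 + (Im (fst q))\<^sup>2 + (Re (snd q))\<^sup>2 + (Im (snd q))\<^sup>2"
  by (cases q) (simp add: norm_Pair cmod_power2 add.assoc)

lemma norm_qmult_sq: "(norm (qmult p q))\<^sup>2 = (norm p)\<^sup>2 * (norm q)\<^sup>2"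
  unfolding norm_sq_q
  by (cases p; cases q) (simp add: qmult_def power2_eq_square algebra_simps)

lemma norm_qmult: "norm (qmult p q) = norm p * norm q"
proof (rule power2_eq_imp_eq)
  show "(norm (qmult p q))\<^sup>2 = (norm p * norm q)\<^sup>2"
    using norm_qmult_sq[of p q] by (simp add: power_mult_distrib)
qed auto

lemma bb_qmult: "bounded_bilinear qmult"
proof
  show "qmult (a + a') b = qmult a b + qmult a' b" for a a' b by (rule qmult_add_left)
  show "qmult a (b + b') = qmult a b + qmult a b'" for a b b' by (rule qmult_add_right)
  show "qmult (r *\<^sub>R a) b = r *\<^sub>R qmult a b" for r a b by (rule qmult_scaleR_left)
  show "qmult a (r *\<^sub>R b) = r *\<^sub>R qmult a b" for r a b by (rule qmult_scaleR_right)
  show "\<exists>K. \<forall>a b. norm (qmult a b) \<le> norm a * norm b * K"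
    by (rule exI[of _ 1]) (simp add: norm_qmult)
qed

lemma bl_qcnj: "bounded_linear qcnj"
proof (rule bounded_linear_intro[of _ 1])
  show "qcnj (x + y) = qcnj x + qcnj y" for x y by (rule qcnj_add)
  show "qcnj (r *\<^sub>R x) = r *\<^sub>R qcnj x" for r x by (rule qcnj_scaleR)
  show "norm (qcnj x) \<le> norm x * 1" for x by (cases x) (simp add: qcnj_def norm_Pair)
qed

definition Dcomm :: "quat \<times> quat \<Rightarrow> quat \<times> quat \<Rightarrow> quat" where
  "Dcomm x h = qmult (qmult (fst x) (snd x)) (qmult (qcnj (fst x)) (qcnj (snd h)) + qmult (qcnj (fst h)) (qcnj (snd x)))
     + qmult (qmult (fst x) (snd h) + qmult (fst h) (snd x)) (qmult (qcnj (fst x)) (qcnj (snd x)))"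


lemma comm_deriv: "(comm has_derivative Dcomm x) (at x)"
proof -
  note bb = bounded_bilinear.FDERIV[OF bb_qmult]
  note cn = bounded_linear.has_derivative[OF bl_qcnj]
  have f: "(fst has_derivative fst) (at x)" "(snd has_derivative snd) (at x)"
    by (rule has_derivative_fst[OF has_derivative_ident]) (rule has_derivative_snd[OF has_derivative_ident])
  have a: "((\<lambda>x. qmult (fst x) (snd x)) has_derivative (\<lambda>h. qmult (fst x) (snd h) + qmult (fst h) (snd x))) (at x)"
    by (rule bb[OF f])
  have b: "((\<lambda>x. qmult (qcnj (fst x)) (qcnj (snd x))) has_derivative (\<lambda>h. qmult (qcnj (fst x)) (qcnj (snd h)) + qmult (qcnj (fst h)) (qcnj (snd x)))) (at x)"
    by (rule bb[OF cn[OF f(1)] cn[OF f(2)]])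
  have e1: "comm = (\<lambda>x. qmult (qmult (fst x) (snd x)) (qmult (qcnj (fst x)) (qcnj (snd x))))"
    by (rule ext) (simp add: comm_def)
  have e2: "Dcomm x = (\<lambda>h. qmult (qmult (fst x) (snd x)) (qmult (qcnj (fst x)) (qcnj (snd h)) + qmult (qcnj (fst h)) (qcnj (snd x)))
     + qmult (qmult (fst x) (snd h) + qmult (fst h) (snd x)) (qmult (qcnj (fst x)) (qcnj (snd x))))"
    by (rule ext) (simp add: Dcomm_def)
  show ?thesis unfolding e1 e2 by (rule bb[OF a b])
qed

lemma frechet_comm: "frechet_derivative comm (at x) = Dcomm x"
  by (rule sym, rule frechet_derivative_at[OF comm_deriv])


lemma cj_add: "cj g (p + q) = cj g p + cj g q" by (simp add: cj_def qmult_add_left qmult_add_right)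
lemma cj_diff: "cj g (p - q) = cj g p - cj g q" by (simp add: cj_def qmult_diff_left qmult_diff_right)
lemma cj_minus: "cj g (- p) = - cj g p" by (simp add: cj_def qmult_minus_left qmult_minus_right)
lemma cj_scaleR: "cj g (c *\<^sub>R p) = c *\<^sub>R cj g p" by (simp add: cj_def qmult_scaleR_left qmult_scaleR_right)

lemma cancel1: "norm g = 1 \<Longrightarrow> qmult g (qmult (qcnj g) x) = x"
  by (simp add: qmult_assoc[symmetric] qmult_cnj_self)
lemma cancel2: "norm g = 1 \<Longrightarrow> qmult (qcnj g) (qmult g x) = x"
  by (simp add: qmult_assoc[symmetric] qcnj_mult_self)
lemma norm_qcnj: "norm (qcnj g) = norm g"
  by (cases g) (simp add: qcnj_def norm_Pair)

lemma cj_mult: "norm g = 1 \<Longrightarrow> cj g (qmult p q) = qmult (cj g p) (cj g q)"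
  by (simp add: cj_def qmult_assoc cancel1)
lemma cj_qcnj: "qcnj (cj g p) = cj g (qcnj p)"
  by (simp add: cj_def qcnj_mult qmult_assoc)
lemma cj_qone: "norm g = 1 \<Longrightarrow> cj g qone = qone"
  by (simp add: cj_def qcnj_mult_self)
lemma cj_inv1: "norm g = 1 \<Longrightarrow> cj (qcnj g) (cj g v) = v"
  by (simp add: cj_def qmult_assoc cancel1 qmult_cnj_self)
lemma cj_inv2: "norm g = 1 \<Longrightarrow> cj g (cj (qcnj g) v) = v"
  by (simp add: cj_def qmult_assoc cancel2 qcnj_mult_self)

lemma Re_cj0: "Re (fst (cj g w)) = (norm g)\<^sup>2 * Re (fst w)"
  unfolding norm_sq_q
  by (cases g; cases w) (simp add: cj_def qmult_def qcnj_def power2_eq_square algebra_simps)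
lemma Re_cj: "norm g = 1 \<Longrightarrow> Re (fst (cj g w)) = Re (fst w)"
  by (simp add: Re_cj0)

lemma inner_q: "inner a v = Re (fst (qmult (qcnj a) v))"
  by (cases a; cases v) (simp add: qmult_def qcnj_def inner_Pair inner_complex_def algebra_simps)

lemma inner_cj: "norm g = 1 \<Longrightarrow> inner (cj g a) (cj g v) = inner a v"
  by (simp add: inner_q cj_qcnj cj_mult[symmetric] Re_cj)

lemma gcoord_cj: "norm g = 1 \<Longrightarrow> gcoord (cj g a) (cj g v) l = (\<Sum>k<3. Rm g l k * gcoord a v k)"
  by (simp add: gcoord_im3 cj_qcnj cj_mult[symmetric] L1)

definition Bm :: "quat \<Rightarrow> nat \<Rightarrow> nat \<Rightarrow> real" where
  "Bm g r s = (if r < 3 then (if s < 3 then Rm g r s else 0) else (if s < 3 then 0 else Rm g (r-3) (s-3)))"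

definition Cm :: "quat \<Rightarrow> nat \<Rightarrow> nat \<Rightarrow> real" where
  "Cm g t c = (if t < 3 then (if c < 3 then Rm g c t else 0) else (if c < 3 then 0 else if t = c then 1 else 0))"

lemma sum6: fixes f :: "nat \<Rightarrow> 'a::comm_monoid_add" shows "(\<Sum>k<6. f k) = f 0 + f 1 + f 2 + f 3 + f 4 + f 5"
  by (simp add: eval_nat_numeral add.commute add.left_commute)

lemma Pcoord_cj: "norm g = 1 \<Longrightarrow> r < 6 \<Longrightarrow> Pcoord (cj2 g y) (cj2 g v) r = (\<Sum>s<6. Bm g r s * Pcoord y v s)"
  by (simp add: sum6 Bm_def Pcoord_def cj2_def gcoord_cj sum3)

lemma fibvec_cj: "norm g = 1 \<Longrightarrow> fibvec (cj2 g y) \<xi> = cj2 g (fibvec y (cj (qcnj g) \<xi>))"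
  by (simp add: fibvec_def cj2_def cj_diff cj_mult cj_inv2)

lemma fibvec_add: "fibvec y (p + q) = fibvec y p + fibvec y q"
  by (simp add: fibvec_def qmult_add_left qmult_add_right)
lemma fibvec_scaleR: "fibvec y (c *\<^sub>R p) = c *\<^sub>R fibvec y p"
  by (simp add: fibvec_def qmult_scaleR_left qmult_scaleR_right scaleR_diff_right)
lemma gcoord_add: "gcoord a (p + q) l = gcoord a p l + gcoord a q l"
  by (simp add: gcoord_im3 qmult_add_right im3_def)
lemma gcoord_scaleR: "gcoord a (c *\<^sub>R p) l = c * gcoord a p l"
  by (simp add: gcoord_im3 qmult_scaleR_right im3_def)
lemma Pcoord_add: "Pcoord y (p + q) l = Pcoord y p l + Pcoord y q l"
  by (simp add: Pcoord_def gcoord_add)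
lemma Pcoord_scaleR: "Pcoord y (c *\<^sub>R p) l = c * Pcoord y p l"
  by (simp add: Pcoord_def gcoord_scaleR)

lemma Dcomm_cj: "norm g = 1 \<Longrightarrow> Dcomm (cj2 g x) (cj2 g h) = cj g (Dcomm x h)"
  by (simp add: Dcomm_def cj2_def cj_add cj_mult cj_qcnj)

lemma gcoord_m1: "gcoord (- qone) w l = - im3 w l"
  by (cases w) (simp add: gcoord_im3 qcnj_def qone_def qmult_def im3_def)

lemma det_Rm0: "det_n 3 (Rm g) = ((norm g)\<^sup>2)^3"
  unfolding norm_sq_q det_n3
  by (cases g) (simp add: Rm_def im3_def cj_def qmult_def qcnj_def ebasis_def qi_def qj_def qk_def power2_eq_square power3_eq_cube algebra_simps)

lemma det_Rm: "norm g = 1 \<Longrightarrow> det_n 3 (Rm g) = 1"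
  by (simp add: det_Rm0)


definition colv :: "quat \<times> quat \<Rightarrow> (nat \<Rightarrow> quat \<times> quat) \<Rightarrow> nat \<Rightarrow> quat \<times> quat" where
  "colv y h c = (if c < 3 then fibvec y (ebasis c) else h (c - 3))"
definition det6 :: "quat \<times> quat \<Rightarrow> (nat \<Rightarrow> quat \<times> quat) \<Rightarrow> real" where
  "det6 y h = det_n 6 (\<lambda>r c. Pcoord y (colv y h c) r)"
definition det3 :: "quat \<times> quat \<Rightarrow> (nat \<Rightarrow> quat \<times> quat) \<Rightarrow> real" where
  "det3 y h = det_n 3 (\<lambda>r c. gcoord (- qone) (Dcomm y (h c)) r)"

lemma pos_alt: "pos_oriented_pt y \<longleftrightarrow> (\<forall>h. (\<forall>l<3. h l \<in> TP y) \<longrightarrow> det6 y h > 0 \<longrightarrow> det3 y h > 0)"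
  by (simp add: pos_oriented_pt_def det6_def det3_def colv_def frechet_comm)

lemma fib_expand: "Pcoord y (fibvec y (cj (qcnj g) (ebasis c))) s = (\<Sum>t<3. Rm g c t * Pcoord y (fibvec y (ebasis t)) s)"
  by (simp add: Rm_orth sum3 fibvec_add fibvec_scaleR Pcoord_add Pcoord_scaleR)

lemma det_Bm: "norm g = 1 \<Longrightarrow> det_n 6 (Bm g) = 1"
proof -
  assume g: "norm g = 1"
  have "det_n 6 (Bm g) = det_n 3 (Bm g) * det_n 3 (\<lambda>r c. Bm g (r+3) (c+3))"
    by (rule det_n_block) (simp add: Bm_def)
  also have "det_n 3 (Bm g) = det_n 3 (Rm g)" by (rule det_n_cong) (simp add: Bm_def)
  also have "det_n 3 (\<lambda>r c. Bm g (r+3) (c+3)) = det_n 3 (Rm g)" by (rule det_n_cong) (simp add: Bm_def)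
  finally show ?thesis using g by (simp add: det_Rm)
qed

lemma det_Cm: "norm g = 1 \<Longrightarrow> det_n 6 (Cm g) = 1"
proof -
  assume g: "norm g = 1"
  have "det_n 6 (Cm g) = det_n 3 (Cm g) * det_n 3 (\<lambda>r c. Cm g (r+3) (c+3))"
    by (rule det_n_block) (simp add: Cm_def)
  also have "det_n 3 (Cm g) = det_n 3 (\<lambda>t c. Rm g c t)" by (rule det_n_cong) (simp add: Cm_def)
  also have "\<dots> = det_n 3 (Rm g)" by (simp add: det_n3 algebra_simps)
  also have "det_n 3 (\<lambda>r c. Cm g (r+3) (c+3)) = 1" by (simp add: det_n3 Cm_def)
  finally show ?thesis using g by (simp add: det_Rm)
qed

lemma det6_cj:
  assumes g: "norm g = 1" and hh: "\<And>c. h' c = cj2 g (h c)"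
  shows "det6 (cj2 g y) h' = det6 y h"
proof -
  define M where "M s t = Pcoord y (colv y h t) s" for s t
  have eq: "Pcoord (cj2 g y) (colv (cj2 g y) h' c) r = (\<Sum>s<6. Bm g r s * (\<Sum>t<6. M s t * Cm g t c))"
    if r: "r < 6" and c: "c < 6" for r c
  proof (cases "c < 3")
    case True
    have "Pcoord (cj2 g y) (colv (cj2 g y) h' c) r = Pcoord (cj2 g y) (cj2 g (fibvec y (cj (qcnj g) (ebasis c)))) r"
      using True g by (simp add: colv_def fibvec_cj)
    also have "\<dots> = (\<Sum>s<6. Bm g r s * Pcoord y (fibvec y (cj (qcnj g) (ebasis c))) s)"
      using g r by (rule Pcoord_cj)
    also have "\<dots> = (\<Sum>s<6. Bm g r s * (\<Sum>t<6. M s t * Cm g t c))"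
      using True by (intro sum.cong refl) (simp add: fib_expand sum6 sum3 M_def Cm_def colv_def mult.commute)
    finally show ?thesis .
  next
    case False
    then have c3: "c = 3 \<or> c = 4 \<or> c = 5" using c by auto
    have "Pcoord (cj2 g y) (colv (cj2 g y) h' c) r = Pcoord (cj2 g y) (cj2 g (h (c - 3))) r"
      using False by (simp add: colv_def hh)
    also have "\<dots> = (\<Sum>s<6. Bm g r s * Pcoord y (h (c - 3)) s)"
      using g r by (rule Pcoord_cj)
    also have "\<dots> = (\<Sum>s<6. Bm g r s * (\<Sum>t<6. M s t * Cm g t c))"
      using c3 by (intro sum.cong refl) (auto simp: sum6 M_def Cm_def colv_def)
    finally show ?thesis .
  qed
  have "det6 (cj2 g y) h' = det_n 6 (\<lambda>r c. \<Sum>s<6. Bm g r s * (\<Sum>t<6. M s t * Cm g t c))"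
    unfolding det6_def by (rule det_n_cong) (simp add: eq)
  also have "\<dots> = det_n 6 (Bm g) * (det_n 6 M * det_n 6 (Cm g))"
    by (simp add: det_n_mult)
  also have "\<dots> = det_n 6 M" using g by (simp add: det_Bm det_Cm)
  also have "det_n 6 M = det6 y h" unfolding det6_def by (rule det_n_cong) (simp add: M_def)
  finally show ?thesis .
qed

lemma det3_cj:
  assumes g: "norm g = 1" and hh: "\<And>c. h' c = cj2 g (h c)"
  shows "det3 (cj2 g y) h' = det3 y h"
proof -
  have "det3 (cj2 g y) h' = det_n 3 (\<lambda>r c. \<Sum>k<3. Rm g r k * gcoord (- qone) (Dcomm y (h c)) k)"
    unfolding det3_def using g by (intro det_n_cong) (simp add: hh Dcomm_cj gcoord_m1 L1 sum_negf[symmetric])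
  also have "\<dots> = det3 y h" using g by (simp add: det_n_mult det_Rm det3_def)
  finally show ?thesis .
qed

lemma transfer:
  assumes g: "norm g = 1" and p: "pos_oriented_pt y"
  shows "pos_oriented_pt (cj2 g y)"
  unfolding pos_alt
proof (intro allI impI)
  fix h' assume t: "\<forall>l<3. h' l \<in> TP (cj2 g y)" and d: "0 < det6 (cj2 g y) h'"
  define h where "h c = cj2 (qcnj g) (h' c)" for c
  have g': "norm (qcnj g) = 1" using g by (simp add: norm_qcnj)
  have hh: "h' c = cj2 g (h c)" for c
    using g by (simp add: h_def cj2_def cj_inv2)
  have th: "\<forall>l<3. h l \<in> TP y"
  proof (intro allI impI)
    fix l :: nat assume l: "l < 3"
    have i1: "inner (cj g (fst y)) (fst (h' l)) = 0" "inner (cj g (snd y)) (snd (h' l)) = 0"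
      using t l by (auto simp: TP_def TG_def cj2_def)
    have "inner (fst y) (fst (h l)) = inner (cj (qcnj g) (cj g (fst y))) (cj (qcnj g) (fst (h' l)))"
      using g by (simp add: h_def cj2_def cj_inv1)
    also have "\<dots> = 0" using i1 g' by (simp add: inner_cj)
    finally have a: "inner (fst y) (fst (h l)) = 0" .
    have "inner (snd y) (snd (h l)) = inner (cj (qcnj g) (cj g (snd y))) (cj (qcnj g) (snd (h' l)))"
      using g by (simp add: h_def cj2_def cj_inv1)
    also have "\<dots> = 0" using i1 g' by (simp add: inner_cj)
    finally have b: "inner (snd y) (snd (h l)) = 0" .
    show "h l \<in> TP y" using a b by (simp add: TP_def TG_def mem_Times_iff)
  qed
  have "0 < det6 y h" using d det6_cj[OF g hh] by simp
  then have "0 < det3 y h" using p th unfolding pos_alt by blast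
  then show "0 < det3 (cj2 g y) h'" using det3_cj[OF g hh] by simp
qed


abbreviation "y0 \<equiv> (qi, qj)"

lemma Dbase:
  assumes "h \<in> TP y0"
  shows "gcoord (- qone) (Dcomm y0 h) 0 = 2 * Pcoord y0 h 0"
    "gcoord (- qone) (Dcomm y0 h) 1 = -2 * Pcoord y0 h 4"
    "gcoord (- qone) (Dcomm y0 h) 2 = 2 * Pcoord y0 h 5 - 2 * Pcoord y0 h 2"
  using assms
  by (cases h; auto simp: TP_def TG_def inner_Pair inner_complex_def Dcomm_def gcoord_m1 im3_def Pcoord_def
      gcoord_def qmult_def qcnj_def qi_def qj_def qone_def algebra_simps)+

lemma Fval: "Pcoord y0 (fibvec y0 (ebasis c)) r =
  (if c = 0 then (if r = 3 then 2 else 0) else if c = 1 then (if r = 1 then 2 else 0)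
   else (if r = 2 \<or> r = 5 then 2 else 0))" if "r < 6"
  using that
  apply (simp add: Pcoord_def gcoord_def fibvec_def ebasis_def qi_def qj_def qk_def qmult_def qcnj_def Let_def)
  apply (auto simp: complex_eq_iff)
  done

lemma base_eq:
  assumes t: "\<forall>l<3. h l \<in> TP y0"
  shows "det3 y0 h = det6 y0 h"
proof -
  define H where "H s c = Pcoord y0 (h c) s" for s c
  have "det3 y0 h = det_n 3 (\<lambda>r c. if r = 0 then 2 * H 0 c else if r = 1 then -2 * H 4 c else 2 * H 5 c - 2 * H 2 c)"
    unfolding det3_def
  proof (rule det_n_cong)
    fix r c :: nat assume r: "r < 3" and c: "c < 3"
    then have tc: "h c \<in> TP y0" using t by auto
    have "r = 0 \<or> r = 1 \<or> r = 2" using r by auto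
    then show "gcoord (- qone) (Dcomm y0 (h c)) r = (if r = 0 then 2 * H 0 c else if r = 1 then -2 * H 4 c else 2 * H 5 c - 2 * H 2 c)"
      using Dbase[OF tc] by (auto simp: H_def)
  qed
  also have "\<dots> = -8 * det_n 3 (\<lambda>r c. if r = 0 then H 0 c else if r = 1 then H 4 c else H 5 c - H 2 c)"
    by (simp add: det_n3 algebra_simps)
  also have "\<dots> = det6 y0 h"
  proof -
    define M where "M r c = Pcoord y0 (colv y0 h c) r" for r c
    define M' where "M' r c = (if r = 5 then M 5 c + (-1) * M 2 c else M r c)" for r c
    define S where "S r c = M' (if r = 0 then 3 else if r = 3 then 0 else r) c" for r c
    have "det6 y0 h = det_n 6 M" unfolding det6_def M_def ..
    also have "\<dots> = det_n 6 M'"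
    proof -
      have "M' = (\<lambda>r c. if r = 5 then M 5 c + (-1) * M 2 c else M r c)" by (simp add: fun_eq_iff M'_def)
      then show ?thesis using det_n_addrow52[of M "-1"] by simp
    qed
    also have "\<dots> = - det_n 6 S"
    proof -
      have "S = (\<lambda>r c. M' (if r = 0 then 3 else if r = 3 then 0 else r) c)" by (simp add: fun_eq_iff S_def)
      then show ?thesis using det_n_swap03[of M'] by simp
    qed
    also have "det_n 6 S = det_n 3 S * det_n 3 (\<lambda>r c. S (r+3) (c+3))"
    proof (rule det_n_block)
      fix r c :: nat assume "3 \<le> r" "r < 6" "c < 3"
      then have "r = 3 \<or> r = 4 \<or> r = 5" "c = 0 \<or> c = 1 \<or> c = 2" by auto
      then show "S r c = 0" by (auto simp: S_def M'_def M_def colv_def Fval)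
    qed
    also have "det_n 3 S = 8"
      by (simp add: det_n3 S_def M'_def M_def colv_def Fval)
    also have "det_n 3 (\<lambda>r c. S (r+3) (c+3)) = det_n 3 (\<lambda>r c. if r = 0 then H 0 c else if r = 1 then H 4 c else H 5 c - H 2 c)"
    proof (rule det_n_cong)
      fix r c :: nat assume "r < 3" "c < 3"
      then have "r = 0 \<or> r = 1 \<or> r = 2" by auto
      then show "S (r+3) (c+3) = (if r = 0 then H 0 c else if r = 1 then H 4 c else H 5 c - H 2 c)"
        by (auto simp: S_def M'_def M_def colv_def H_def)
    qed
    finally show ?thesis by simp
  qed
  finally show ?thesis .
qed

lemma base_pos: "pos_oriented_pt y0"
  unfolding pos_alt using base_eq by auto


lemma anticomm:
  assumes a: "norm a = 1" and b: "norm b = 1" and c: "comm (a, b) = - qone"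
  shows "qmult a b = - qmult b a"
proof -
  have "qmult (comm (a,b)) (qmult b a) = qmult a b"
    using a b by (simp add: comm_def qmult_assoc cancel2 qcnj_mult_self)
  then show ?thesis using c by (simp add: qmult_minus_left)
qed

lemma pure_orth:
  assumes a: "norm a = 1" and b: "norm b = 1" and e: "qmult a b = - qmult b a"
  shows "Re (fst a) = 0" "Re (fst b) = 0" "inner a b = 0"
proof -
  obtain A0 A1 A2 A3 where ad: "a = (Complex A0 A1, Complex A2 A3)" by (metis complex.exhaust prod.exhaust)
  obtain B0 B1 B2 B3 where bd: "b = (Complex B0 B1, Complex B2 B3)" by (metis complex.exhaust prod.exhaust)
  have ua: "A0^2 + A1^2 + A2^2 + A3^2 = 1" using unit_sq[OF a] by (simp add: ad)
  have ub: "B0^2 + B1^2 + B2^2 + B3^2 = 1" using unit_sq[OF b] by (simp add: bd)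
  have comps: "fst (qmult a b) = fst (- qmult b a)" "snd (qmult a b) = snd (- qmult b a)" using e by simp_all
  have e0: "A0*B0 - A1*B1 - A2*B2 - A3*B3 = 0"
    using arg_cong[OF comps(1), of Re] by (simp add: ad bd qmult_def algebra_simps)
  have e1: "A0*B1 + B0*A1 = 0"
    using arg_cong[OF comps(1), of Im] by (simp add: ad bd qmult_def algebra_simps)
  have e2: "A0*B2 + B0*A2 = 0"
    using arg_cong[OF comps(2), of Re] by (simp add: ad bd qmult_def algebra_simps)
  have e3: "A0*B3 + B0*A3 = 0"
    using arg_cong[OF comps(2), of Im] by (simp add: ad bd qmult_def algebra_simps)
  have "B0 = B0 * (A0^2 + A1^2 + A2^2 + A3^2)" using ua by simp
  also have "\<dots> = A0 * (A0*B0 - A1*B1 - A2*B2 - A3*B3) + A1 * (A0*B1 + B0*A1) + A2 * (A0*B2 + B0*A2) + A3 * (A0*B3 + B0*A3)"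
    by (simp add: power2_eq_square algebra_simps)
  finally have B0: "B0 = 0" using e0 e1 e2 e3 by simp
  have "A0 = A0 * (B0^2 + B1^2 + B2^2 + B3^2)" using ub by simp
  also have "\<dots> = B0 * (A0*B0 - A1*B1 - A2*B2 - A3*B3) + B1 * (A0*B1 + B0*A1) + B2 * (A0*B2 + B0*A2) + B3 * (A0*B3 + B0*A3)"
    by (simp add: power2_eq_square algebra_simps)
  finally have A0: "A0 = 0" using e0 e1 e2 e3 by simp
  show "Re (fst a) = 0" using A0 by (simp add: ad)
  show "Re (fst b) = 0" using B0 by (simp add: bd)
  show "inner a b = 0" using e0 A0 B0 by (simp add: ad bd inner_Pair inner_complex_def)
qed


lemma pure_sq: "norm a = 1 \<Longrightarrow> Re (fst a) = 0 \<Longrightarrow> qmult a a = - qone"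
  apply (drule unit_sq) apply (cases a)
  by (simp add: qmult_def qone_def complex_eq_iff power2_eq_square algebra_simps)
lemma pure_cnj: "Re (fst a) = 0 \<Longrightarrow> qcnj a = - a"
  by (cases a) (simp add: qcnj_def complex_eq_iff)
lemma orth_anti: "Re (fst a) = 0 \<Longrightarrow> Re (fst b) = 0 \<Longrightarrow> inner a b = 0 \<Longrightarrow> qmult b a = - qmult a b"
  by (cases a; cases b) (simp add: qmult_def inner_Pair inner_complex_def complex_eq_iff algebra_simps)

lemma basis_tab:
  "qmult qi qi = - qone" "qmult qj qj = - qone" "qmult qk qk = - qone"
  "qmult qi qj = qk" "qmult qj qi = - qk" "qmult qj qk = qi" "qmult qk qj = - qi"
  "qmult qk qi = qj" "qmult qi qk = - qj"
  by (simp_all add: qmult_def qi_def qj_def qk_def qone_def)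

definition QQ :: "quat \<Rightarrow> quat \<Rightarrow> quat \<Rightarrow> quat \<Rightarrow> quat" where
  "QQ a b c r = r - qmult a (qmult r qi) - qmult b (qmult r qj) - qmult c (qmult r qk)"

lemma trace4: "Re (fst (QQ a b c qone)) + Im (fst (QQ a b c qi)) + Re (snd (QQ a b c qj)) + Im (snd (QQ a b c qk)) = 4"
  by (cases a; cases b; cases c) (simp add: QQ_def qmult_def qi_def qj_def qk_def qone_def algebra_simps)

lemma nassoc: "qmult x (qmult y z) = w \<Longrightarrow> qmult x (qmult y (qmult z v)) = qmult w v"
  by (simp add: qmult_assoc[symmetric])

lemma intertwine:
  assumes a: "norm a = 1" "Re (fst a) = 0" and b: "norm b = 1" "Re (fst b) = 0" and ab: "inner a b = 0"
    and c: "c = qmult a b"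
  shows "qmult a (QQ a b c r) = qmult (QQ a b c r) qi" "qmult b (QQ a b c r) = qmult (QQ a b c r) qj"
proof -
  have aa: "qmult a a = - qone" using a by (rule pure_sq)
  have bb: "qmult b b = - qone" using b by (rule pure_sq)
  have ba: "qmult b a = - c" using orth_anti[OF a(2) b(2) ab] c by simp
  have r1: "qmult a (qmult a x) = - x" for x using aa by (simp add: qmult_assoc[symmetric] qmult_minus_left)
  have r2: "qmult a (qmult b x) = qmult c x" for x using c by (simp add: qmult_assoc[symmetric])
  have r3: "qmult a (qmult c x) = - qmult b x" for x using c aa by (simp add: qmult_assoc[symmetric] qmult_minus_left)
  have r4: "qmult b (qmult a x) = - qmult c x" for x using ba by (simp add: qmult_assoc[symmetric] qmult_minus_left)
  have r5: "qmult b (qmult b x) = - x" for x using bb by (simp add: qmult_assoc[symmetric] qmult_minus_left)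
  have r6: "qmult b (qmult c x) = qmult a x" for x
  proof -
    have "qmult b (qmult c x) = qmult (qmult b a) (qmult b x)" using c by (simp add: qmult_assoc)
    also have "\<dots> = - qmult a (qmult b (qmult b x))" using ba c by (simp add: qmult_assoc qmult_minus_left)
    also have "\<dots> = qmult a x" using r5 by (simp add: qmult_minus_right)
    finally show ?thesis .
  qed

  show "qmult a (QQ a b c r) = qmult (QQ a b c r) qi"
    by (simp add: QQ_def qmult_add_left qmult_add_right qmult_diff_left qmult_diff_right qmult_assoc r1 r2 r3 qmult_minus_right qmult_minus_left basis_tab algebra_simps)
  show "qmult b (QQ a b c r) = qmult (QQ a b c r) qj"
    by (simp add: QQ_def qmult_add_left qmult_add_right qmult_diff_left qmult_diff_right qmult_assoc r4 r5 r6 qmult_minus_right qmult_minus_left basis_tab algebra_simps)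
qed


lemma qcnj_zero_iff: "qcnj q = 0 \<longleftrightarrow> q = 0"
  by (cases q) (auto simp: qcnj_def zero_prod_def)

lemma exists_g:
  assumes y: "y \<in> P2" and cm: "comm y = - qone"
  shows "\<exists>g\<in>Sp1. y = cj2 g y0"
proof -
  obtain a b where yd: "y = (a, b)" by (cases y)
  have a: "norm a = 1" and b: "norm b = 1" using y by (auto simp: yd P2_def Sp1_def)
  have e: "qmult a b = - qmult b a" using anticomm[OF a b] cm yd by simp
  note po = pure_orth[OF a b e]
  define c where "c = qmult a b"
  have "\<exists>r. QQ a b c r \<noteq> 0"
  proof (rule ccontr)
    assume "\<not> ?thesis"
    then have "QQ a b c qone = 0" "QQ a b c qi = 0" "QQ a b c qj = 0" "QQ a b c qk = 0" by blast+
    then show False using trace4[of a b c] by simp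
  qed
  then obtain r where Q: "QQ a b c r \<noteq> 0" by blast
  define q where "q = qcnj (QQ a b c r)"
  have q0: "q \<noteq> 0" using Q by (simp add: q_def qcnj_zero_iff)
  define g where "g = (1 / norm q) *\<^sub>R q"
  have g: "norm g = 1" using q0 by (simp add: g_def)
  note it = intertwine[OF a po(1) b po(2) po(3) c_def, of r]
  have ci: "qcnj qi = - qi" and cjj: "qcnj qj = - qj" by (simp_all add: qcnj_def qi_def qj_def)
  have ca: "qcnj a = - a" and cb: "qcnj b = - b" using po by (simp_all add: pure_cnj)
  have "qcnj (qmult a (QQ a b c r)) = qcnj (qmult (QQ a b c r) qi)" using it(1) by simp
  then have qa: "qmult qi q = qmult q a"
    by (simp add: qcnj_mult ca ci q_def qmult_minus_left qmult_minus_right)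
  have "qcnj (qmult b (QQ a b c r)) = qcnj (qmult (QQ a b c r) qj)" using it(2) by simp
  then have qb: "qmult qj q = qmult q b"
    by (simp add: qcnj_mult cb cjj q_def qmult_minus_left qmult_minus_right)
  have ga: "qmult qi g = qmult g a" using qa by (simp add: g_def qmult_scaleR_left qmult_scaleR_right)
  have gb: "qmult qj g = qmult g b" using qb by (simp add: g_def qmult_scaleR_left qmult_scaleR_right)
  have "cj g qi = a" using ga g by (simp add: cj_def cancel2)
  moreover have "cj g qj = b" using gb g by (simp add: cj_def cancel2)
  ultimately have "y = cj2 g y0" by (simp add: yd cj2_def)
  then show ?thesis using g unfolding Sp1_def by blast
qed

lemma cj2_comp: "cj2 k (cj2 g x) = cj2 (qmult g k) x"
  by (simp add: cj2_def cj_def qcnj_mult qmult_assoc)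

lemma orbit_alt: "orbit x = (\<lambda>g. cj2 g x) ` Sp1"
  by (simp add: orbit_def act_cj2)

lemma orbit_cj2: assumes g: "g \<in> Sp1" shows "orbit (cj2 g x) = orbit x"
proof -
  have ng: "norm g = 1" using g by (simp add: Sp1_def)
  show ?thesis unfolding orbit_alt
  proof (intro equalityI subsetI)
    fix z assume "z \<in> (\<lambda>k. cj2 k (cj2 g x)) ` Sp1"
    then obtain k where k: "k \<in> Sp1" "z = cj2 k (cj2 g x)" by blast
    then have "z = cj2 (qmult g k) x" by (simp add: cj2_comp)
    moreover have "qmult g k \<in> Sp1" using k ng by (simp add: Sp1_def norm_qmult)
    ultimately show "z \<in> (\<lambda>g. cj2 g x) ` Sp1" by blast
  next
    fix z assume "z \<in> (\<lambda>g. cj2 g x) ` Sp1"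
    then obtain k where k: "k \<in> Sp1" "z = cj2 k x" by blast
    then have "z = cj2 (qmult (qcnj g) k) (cj2 g x)" using ng by (simp add: cj2_comp cancel1)
    moreover have "qmult (qcnj g) k \<in> Sp1" using k ng by (simp add: Sp1_def norm_qmult norm_qcnj)
    ultimately show "z \<in> (\<lambda>k. cj2 k (cj2 g x)) ` Sp1" by blast
  qed
qed

lemma y0_P2: "y0 \<in> P2"
  by (simp add: P2_def Sp1_def qi_def qj_def norm_Pair)

lemma stab:
  assumes g: "g \<in> Sp1" and e: "act y0 g = y0"
  shows "g \<in> {qone, - qone}"
proof -
  have ng: "norm g = 1" using g by (simp add: Sp1_def)
  have c1: "cj g qi = qi" and c2: "cj g qj = qj" using e by (simp_all add: act_cj2 cj2_def)
  have "qmult g (cj g qi) = qmult qi g" using ng by (simp add: cj_def cancel1)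
  then have m1: "qmult qi g = qmult g qi" using c1 by simp
  have "qmult g (cj g qj) = qmult qj g" using ng by (simp add: cj_def cancel1)
  then have m2: "qmult qj g = qmult g qj" using c2 by simp
  obtain G0 G1 G2 G3 where gd: "g = (Complex G0 G1, Complex G2 G3)" by (metis complex.exhaust prod.exhaust)
  have u: "G0^2 + G1^2 + G2^2 + G3^2 = 1" using unit_sq[OF ng] by (simp add: gd)
  have z: "G1 = 0" "G2 = 0" "G3 = 0"
    using m1 m2 by (auto simp: gd qmult_def qi_def qj_def complex_eq_iff)
  then have "G0^2 = 1" using u by simp
  then have "G0 = 1 \<or> G0 = -1" by (simp add: power2_eq_1_iff)
  then show ?thesis using z by (auto simp: gd qone_def complex_eq_iff)
qed

lemma y0_P2star: "y0 \<in> P2star"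
  using y0_P2 stab by (auto simp: P2star_def)

lemma comm_y0: "comm y0 = - qone"
  by (simp add: comm_def qmult_def qcnj_def qi_def qj_def qone_def)

theorem lemma3p3:
  shows "\<exists>x \<in> P2star. comm x = - qone \<and> V12 = {orbit x} \<and> (\<forall>y \<in> orbit x. pos_oriented_pt y)"
proof (intro bexI conjI)
  show "y0 \<in> P2star" by (rule y0_P2star)
  show "comm y0 = - qone" by (rule comm_y0)
  show "V12 = {orbit y0}"
  proof (intro equalityI subsetI)
    fix Ob assume "Ob \<in> V12"
    then obtain x where x: "Ob = orbit x" "x \<in> P2star" "comm x = - qone" by (auto simp: V12_def)
    have "x \<in> P2" using x(2) by (simp add: P2star_def)
    then obtain g where g: "g \<in> Sp1" "x = cj2 g y0" using exists_g x(3) by blast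
    show "Ob \<in> {orbit y0}" using x(1) g orbit_cj2 by simp
  next
    fix Ob assume "Ob \<in> {orbit y0}"
    then have "Ob = orbit y0" by simp
    then show "Ob \<in> V12" using y0_P2star comm_y0 unfolding V12_def by blast
  qed
  show "\<forall>y \<in> orbit y0. pos_oriented_pt y"
  proof
    fix y assume "y \<in> orbit y0"
    then obtain g where g: "g \<in> Sp1" "y = cj2 g y0" by (auto simp: orbit_alt)
    show "pos_oriented_pt y" using transfer[OF _ base_pos, of g] g by (simp add: Sp1_def)
  qed
qed


end
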